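(* Let $m\ge1$, $y\in\mathbb{R}^{2m+1}_+$ with $c:=\sqrt{\sum_{i=0}^{2m}y_i}>0$, and let $(x^t)_{t\ge0}$ be generated by $x^{t+1}=I(x^t)$, where $$I(x)_j=x_j\,\frac1c\sum_{\ell=0}^m\frac{x_\ell\,y_{\ell+j}}{(x*x)_{\ell+j}},\qquad j=0,\dots,m,$$ from an initial $x^0\in\mathbb{R}^{m+1}_+$. If $x^\infty$ is a limit point of the sequence $(x^t)$, then $x^\infty=I(x^\infty)$.
   Context: For $x\in\mathbb{R}^{m+1}$ set $x_k=0$ for $k<0$, $k>m$, and $(x*x)_i=\sum_{j=0}^i x_{i-j}x_j$ for $i=0,\dots,2m$. The iteration is assumed well-defined (denominators positive, e.g. $x^0>0$). *)

theory Defs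
  imports Complex_Main
begin

text \<open>Vectors x in R^(m+1) are represented as functions nat => real; only the
  entries 0..m are relevant.  zext m x k is x_k for k <= m and 0 otherwise.\<close>
definition zext :: "nat \<Rightarrow> (nat \<Rightarrow> real) \<Rightarrow> nat \<Rightarrow> real" where
  "zext m x k = (if k \<le> m then x k else 0)"

definition selfconv :: "nat \<Rightarrow> (nat \<Rightarrow> real) \<Rightarrow> nat \<Rightarrow> real" where
  "selfconv m x i = (\<Sum>j = 0..i. zext m x (i - j) * zext m x j)"

definition Imap :: "nat \<Rightarrow> (nat \<Rightarrow> real) \<Rightarrow> (nat \<Rightarrow> real) \<Rightarrow> nat \<Rightarrow> real" where
  "Imap m y x j =
     (if j \<le> m then
        x j * (1 / sqrt (\<Sum>i = 0..2*m. y i)) *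
          (\<Sum>l = 0..m. x l * y (l + j) / selfconv m x (l + j))
      else 0)"

fun iter :: "nat \<Rightarrow> (nat \<Rightarrow> real) \<Rightarrow> (nat \<Rightarrow> real) \<Rightarrow> nat \<Rightarrow> nat \<Rightarrow> real" where
  "iter m y x0 0 = x0"
| "iter m y x0 (Suc t) = Imap m y (iter m y x0 t)"

end

theory Submission
  imports Defs
begin

lemma antidiag:
  fixes G :: "nat \<Rightarrow> nat \<Rightarrow> real"
  assumes "\<And>l j. l > m \<or> j > m \<Longrightarrow> G l j = 0"
  shows "(\<Sum>k=0..2*m. \<Sum>j=0..k. G (k-j) j) = (\<Sum>l=0..m. \<Sum>j=0..m. G l j)"
proof -
  have "(\<Sum>k=0..2*m. \<Sum>j=0..k. G (k-j) j) = (\<Sum>(i,j)\<in>{(i,j). i+j \<le> 2*m}. G j i)"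
    using sum.triangle_reindex_eq[of "\<lambda>i j. G j i" "2*m"] by (simp add: atLeast0AtMost)
  also have "\<dots> = (\<Sum>(i,j)\<in>{0..m}\<times>{0..m}. G j i)"
  proof (rule sum.mono_neutral_right)
    have "{(i,j). i+j \<le> 2*m} \<subseteq> {0..2*m} \<times> {0..2*m}" by auto
    then show "finite {(i::nat,j::nat). i+j \<le> 2*m}" by (rule finite_subset) auto
    show "{0..m}\<times>{0..m} \<subseteq> {(i::nat,j). i+j \<le> 2*m}" by auto
    show "\<forall>x\<in>{(i, j). i + j \<le> 2 * m} - {0..m} \<times> {0..m}. (case x of (i, j) \<Rightarrow> G j i) = 0"
    proof (intro ballI)
      fix p assume pm: "p \<in> {(i, j). i + j \<le> 2 * m} - {0..m} \<times> {0..m}"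
      obtain i j where pij: "p = (i,j)" by (cases p)
      hence "i > m \<or> j > m" using pm by auto
      thus "(case p of (i, j) \<Rightarrow> G j i) = 0" using assms pij by auto
    qed
  qed
  also have "\<dots> = (\<Sum>i=0..m. \<Sum>j=0..m. G j i)" by (simp add: sum.cartesian_product)
  also have "\<dots> = (\<Sum>l=0..m. \<Sum>j=0..m. G l j)" by (rule sum.swap)
  finally show ?thesis .
qed

definition Bf :: "nat \<Rightarrow> (nat \<Rightarrow> real) \<Rightarrow> (nat \<Rightarrow> real) \<Rightarrow> nat \<Rightarrow> real" where
  "Bf m y x j = (1 / sqrt (\<Sum>i = 0..2*m. y i)) *
          (\<Sum>l = 0..m. x l * y (l + j) / selfconv m x (l + j))"

lemma Imap_eq: "j \<le> m \<Longrightarrow> Imap m y x j = x j * Bf m y x j"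
  by (simp add: Imap_def Bf_def mult.assoc)

lemma zext_Imap: "zext m (Imap m y x) i = zext m x i * Bf m y x i"
  by (simp add: zext_def Imap_eq)

definition Lf :: "nat \<Rightarrow> (nat \<Rightarrow> real) \<Rightarrow> (nat \<Rightarrow> real) \<Rightarrow> real" where
  "Lf m y x = (\<Sum>k = 0..2*m. y k * ln (selfconv m x k))"

definition Df :: "nat \<Rightarrow> (nat \<Rightarrow> real) \<Rightarrow> (nat \<Rightarrow> real) \<Rightarrow> real" where
  "Df m y x = (\<Sum>j = 0..m. x j * (sqrt (Bf m y x j) - 1)^2)"

lemma phi:
  fixes u :: real assumes u: "u \<ge> 0"
  shows "u - 1 + (sqrt u - 1)^2 \<le> u * ln u"
proof (cases "u = 0")
  case True then show ?thesis by simp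
next
  case False
  hence up: "u > 0" using u by simp
  define s where "s = sqrt u"
  have s: "s > 0" "s^2 = u" using up by (auto simp: s_def)
  have "ln (1/s) \<le> 1/s - 1" using s by (intro ln_le_minus_one) simp
  hence l: "ln s \<ge> 1 - 1/s" using s by (simp add: ln_div)
  have lu: "ln u = 2 * ln s" using s ln_realpow[of s 2] by simp
  have "u - 1 + (sqrt u - 1)^2 = 2 * s^2 * (1 - 1/s)"
    using s by (simp add: s_def[symmetric] power2_eq_square field_simps)
  also have "\<dots> \<le> 2 * s^2 * ln s" using l s by (intro mult_left_mono) auto
  also have "\<dots> = u * ln u" using s lu by simp
  finally show ?thesis .
qed

locale hyp =
  fixes m :: nat and y x :: "nat \<Rightarrow> real"
  assumes yn: "\<forall>i \<le> 2*m. y i \<ge> 0"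
    and cp: "sqrt (\<Sum>i = 0..2*m. y i) > 0"
    and xn: "\<forall>j \<le> m. x j \<ge> 0"
    and qp: "\<forall>k \<le> 2*m. selfconv m x k > 0"
begin

lemma B_nonneg: "j \<le> m \<Longrightarrow> Bf m y x j \<ge> 0"
  unfolding Bf_def using yn xn qp cp
  by (intro mult_nonneg_nonneg sum_nonneg divide_nonneg_nonneg) (auto intro: less_imp_le)

lemma B_pos:
  assumes "l \<le> m" "j \<le> m" "x l > 0" "y (l+j) > 0"
  shows "Bf m y x j > 0"
proof -
  have q: "selfconv m x (l+j) > 0" using qp assms by auto
  have "0 < x l * y (l + j) / selfconv m x (l + j)" using assms q by simp
  also have "\<dots> \<le> (\<Sum>l = 0..m. x l * y (l + j) / selfconv m x (l + j))"
    using assms yn xn qp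
    by (intro member_le_sum) (auto intro!: divide_nonneg_nonneg mult_nonneg_nonneg simp: less_imp_le)
  finally show ?thesis unfolding Bf_def using cp by simp
qed

lemma sum_xB: "(\<Sum>j=0..m. x j * Bf m y x j) = sqrt (\<Sum>i = 0..2*m. y i)"
proof -
  let ?c = "sqrt (\<Sum>i = 0..2*m. y i)"
  define G where "G l j = zext m x l * zext m x j * y (l+j) / selfconv m x (l+j)" for l j
  have "(\<Sum>k=0..2*m. \<Sum>j=0..k. G (k-j) j) = (\<Sum>l=0..m. \<Sum>j=0..m. G l j)"
    by (rule antidiag) (auto simp: G_def zext_def)
  also have "\<dots> = (\<Sum>j=0..m. x j * (\<Sum>l = 0..m. x l * y (l + j) / selfconv m x (l + j)))"
    by (subst sum.swap) (auto simp: G_def zext_def sum_distrib_left mult_ac intro!: sum.cong)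
  finally have A: "(\<Sum>j=0..m. x j * (\<Sum>l = 0..m. x l * y (l + j) / selfconv m x (l + j)))
     = (\<Sum>k=0..2*m. \<Sum>j=0..k. G (k-j) j)" ..
  have "(\<Sum>j=0..k. G (k-j) j) = y k" if "k \<le> 2*m" for k
  proof -
    have "(\<Sum>j=0..k. G (k-j) j) = (\<Sum>j=0..k. zext m x (k-j) * zext m x j) * y k / selfconv m x k"
      by (auto simp: G_def sum_divide_distrib sum_distrib_right intro!: sum.cong)
    also have "\<dots> = y k" using qp that unfolding selfconv_def[symmetric] by auto
    finally show ?thesis .
  qed
  hence "(\<Sum>k=0..2*m. \<Sum>j=0..k. G (k-j) j) = (\<Sum>i = 0..2*m. y i)" by (auto intro: sum.cong)
  moreover have "(\<Sum>i = 0..2*m. y i) \<ge> 0" using yn by (auto intro: sum_nonneg)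
  ultimately have "(\<Sum>j=0..m. x j * (\<Sum>l = 0..m. x l * y (l + j) / selfconv m x (l + j))) = ?c * ?c"
    using A by simp
  moreover have "(\<Sum>j=0..m. x j * Bf m y x j) = (1/?c) * (\<Sum>j=0..m. x j * (\<Sum>l = 0..m. x l * y (l + j) / selfconv m x (l + j)))"
    unfolding Bf_def sum_distrib_left by (rule sum.cong) auto
  ultimately show ?thesis using cp by (simp add: real_div_sqrt)
qed


lemma zext_nonneg: "zext m x i \<ge> 0"
  using xn by (simp add: zext_def)

lemma key_k:
  assumes k: "k \<le> 2*m"
  shows "(\<Sum>j=0..k. y k * (zext m x (k-j) * zext m x j / selfconv m x k) *
            (ln (Bf m y x (k-j)) + ln (Bf m y x j)))
         \<le> y k * ln (selfconv m (Imap m y x) k) - y k * ln (selfconv m x k)"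
proof (cases "y k = 0")
  case True then show ?thesis by simp
next
  case False
  hence yk: "y k > 0" using yn k by force
  define Q where "Q = selfconv m x k"
  have Q: "Q > 0" using qp k by (simp add: Q_def)
  define B where "B = Bf m y x"
  define w where "w j = zext m x (k-j) * zext m x j / Q" for j
  define u where "u j = B (k-j) * B j" for j
  have wn: "w j \<ge> 0" for j using Q zext_nonneg by (simp add: w_def)
  have ws: "(\<Sum>j=0..k. w j) = 1"
    unfolding w_def sum_divide_distrib[symmetric] using Q by (simp add: Q_def selfconv_def)
  have wpos: "B (k-j) > 0 \<and> B j > 0" if j: "j \<le> k" "w j > 0" for j
  proof -
    have "zext m x (k-j) * zext m x j > 0" using j Q by (simp add: w_def zero_less_divide_iff)
    hence "zext m x (k-j) \<noteq> 0" "zext m x j \<noteq> 0" by auto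
    hence a: "k - j \<le> m" "j \<le> m" "x (k-j) \<noteq> 0" "x j \<noteq> 0" by (auto simp: zext_def split: if_splits)
    hence b: "x (k-j) > 0" "x j > 0" using xn by (auto simp: order_le_less)
    have "B j > 0" unfolding B_def using a b yk j by (intro B_pos[of "k-j"]) auto
    moreover have "B (k-j) > 0" unfolding B_def using a b yk j by (intro B_pos[of "j"]) auto
    ultimately show ?thesis by simp
  qed
  have wun: "w j * u j \<ge> 0" if "j \<le> k" for j
  proof (cases "w j = 0")
    case False then have "w j > 0" using wn[of j] by simp
    then show ?thesis using wpos[OF that] by (simp add: u_def)
  qed simp
  define S where "S = (\<Sum>j=0..k. w j * u j)"
  have P: "selfconv m (Imap m y x) k = Q * S"
    unfolding selfconv_def zext_Imap S_def sum_distrib_left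
    by (rule sum.cong) (use Q in \<open>auto simp: w_def u_def B_def\<close>)
  obtain j0 where j0: "j0 \<le> k" "w j0 > 0"
  proof (rule ccontr)
    assume "\<not> thesis"
    hence "\<forall>j\<in>{0..k}. w j \<le> 0" using that by force
    hence "(\<Sum>j=0..k. w j) \<le> 0" by (intro sum_nonpos) auto
    thus False using ws by simp
  qed
  have "0 < w j0 * u j0" using j0 wpos[OF j0] by (simp add: u_def)
  also have "\<dots> \<le> S" unfolding S_def using j0 wun by (intro member_le_sum) auto
  finally have S: "S > 0" .
  have jen: "w j * ln (u j) \<le> w j * (ln S + u j / S - 1)" if j: "j \<le> k" for j
  proof (cases "w j = 0")
    case False then have "w j > 0" using wn[of j] by simp
    hence up: "u j > 0" using wpos[OF j] by (simp add: u_def)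
    have "ln (u j / S) \<le> u j / S - 1" using up S by (intro ln_le_minus_one) simp
    hence "ln (u j) \<le> ln S + u j / S - 1" using up S by (simp add: ln_div)
    then show ?thesis using wn[of j] by (rule mult_left_mono)
  qed simp
  have "(\<Sum>j=0..k. w j * ln (u j)) \<le> (\<Sum>j=0..k. w j * (ln S + u j / S - 1))"
    using jen by (intro sum_mono) auto
  also have "\<dots> = (\<Sum>j=0..k. ln S * w j + (w j * u j) / S - w j)"
    by (rule sum.cong) (auto simp: algebra_simps)
  also have "\<dots> = ln S * (\<Sum>j=0..k. w j) + (\<Sum>j=0..k. w j * u j) / S - (\<Sum>j=0..k. w j)"
    by (simp add: sum_subtractf sum.distrib sum_distrib_left sum_divide_distrib)
  also have "\<dots> = ln S" using ws S by (simp add: S_def[symmetric])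
  finally have J: "(\<Sum>j=0..k. w j * ln (u j)) \<le> ln S" .
  have "(\<Sum>j=0..k. y k * (zext m x (k-j) * zext m x j / selfconv m x k) *
            (ln (Bf m y x (k-j)) + ln (Bf m y x j))) = y k * (\<Sum>j=0..k. w j * ln (u j))"
    unfolding sum_distrib_left
  proof (rule sum.cong)
    fix j assume "j \<in> {0..k}"
    hence j: "j \<le> k" by simp
    show "y k * (zext m x (k-j) * zext m x j / selfconv m x k) *
            (ln (Bf m y x (k-j)) + ln (Bf m y x j)) = y k * (w j * ln (u j))"
    proof (cases "w j = 0")
      case True then show ?thesis by (auto simp add: w_def Q_def)
    next
      case False then have "w j > 0" using wn[of j] by simp
      then show ?thesis using wpos[OF j] by (simp add: u_def ln_mult w_def Q_def B_def)
    qed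
  qed simp
  also have "\<dots> \<le> y k * ln S" using J yk by (intro mult_left_mono) auto
  also have "\<dots> = y k * ln (selfconv m (Imap m y x) k) - y k * ln (selfconv m x k)"
    using P Q S by (simp add: ln_mult Q_def algebra_simps)
  finally show ?thesis .
qed


lemma key:
  "2 * sqrt (\<Sum>i = 0..2*m. y i) * (\<Sum>j=0..m. x j * Bf m y x j * ln (Bf m y x j))
     \<le> Lf m y (Imap m y x) - Lf m y x"
proof -
  let ?c = "sqrt (\<Sum>i = 0..2*m. y i)"
  define B where "B = Bf m y x"
  define G where "G l j = y (l+j) * (zext m x l * zext m x j / selfconv m x (l+j)) *
            (ln (B l) + ln (B j))" for l j
  define h where "h l j = y (l+j) * (x l * x j / selfconv m x (l+j))" for l j
  define T where "T j = (\<Sum>l = 0..m. x l * y (l + j) / selfconv m x (l + j))" for j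
  have TB: "T j = ?c * B j" for j unfolding T_def B_def Bf_def using cp by simp
  have hs: "(\<Sum>l=0..m. h l j) = x j * T j" for j
    unfolding T_def sum_distrib_left h_def by (rule sum.cong) auto
  have hsym: "h l j = h j l" for l j unfolding h_def by (simp add: add.commute mult.commute)
  have "(\<Sum>k=0..2*m. \<Sum>j=0..k. G (k-j) j) \<le>
        (\<Sum>k=0..2*m. y k * ln (selfconv m (Imap m y x) k) - y k * ln (selfconv m x k))"
  proof (rule sum_mono)
    fix k assume "k \<in> {0..2*m}"
    hence k: "k \<le> 2*m" by simp
    have "(\<Sum>j=0..k. G (k-j) j) = (\<Sum>j=0..k. y k * (zext m x (k-j) * zext m x j / selfconv m x k) *
            (ln (Bf m y x (k-j)) + ln (Bf m y x j)))"
      by (rule sum.cong) (auto simp: G_def B_def)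
    also have "\<dots> \<le> y k * ln (selfconv m (Imap m y x) k) - y k * ln (selfconv m x k)"
      using key_k[OF k] .
    finally show "(\<Sum>j=0..k. G (k-j) j) \<le> y k * ln (selfconv m (Imap m y x) k) - y k * ln (selfconv m x k)" .
  qed
  also have "\<dots> = Lf m y (Imap m y x) - Lf m y x" by (simp add: Lf_def sum_subtractf)
  finally have A: "(\<Sum>k=0..2*m. \<Sum>j=0..k. G (k-j) j) \<le> Lf m y (Imap m y x) - Lf m y x" .
  have "(\<Sum>k=0..2*m. \<Sum>j=0..k. G (k-j) j) = (\<Sum>l=0..m. \<Sum>j=0..m. G l j)"
    by (rule antidiag) (auto simp: G_def zext_def)
  also have "\<dots> = (\<Sum>l=0..m. \<Sum>j=0..m. h l j * ln (B l)) + (\<Sum>l=0..m. \<Sum>j=0..m. h l j * ln (B j))"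
    unfolding sum.distrib[symmetric] by (intro sum.cong) (auto simp: G_def h_def zext_def algebra_simps add_divide_distrib)
  also have "(\<Sum>l=0..m. \<Sum>j=0..m. h l j * ln (B l)) = (\<Sum>l=0..m. ln (B l) * x l * T l)"
  proof (rule sum.cong)
    fix l assume "l \<in> {0..m}"
    have "(\<Sum>j=0..m. h l j * ln (B l)) = ln (B l) * (\<Sum>j=0..m. h j l)"
      by (simp add: sum_distrib_left hsym mult.commute)
    also have "\<dots> = ln (B l) * x l * T l" by (simp add: hs)
    finally show "(\<Sum>j=0..m. h l j * ln (B l)) = ln (B l) * x l * T l" .
  qed simp
  also have "(\<Sum>l=0..m. \<Sum>j=0..m. h l j * ln (B j)) = (\<Sum>j=0..m. ln (B j) * x j * T j)"
    apply (subst sum.swap)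
    apply (rule sum.cong)
     apply simp
    apply (simp add: sum_distrib_left[symmetric] hs mult_ac)
    done
  also have "(\<Sum>l=0..m. ln (B l) * x l * T l) + (\<Sum>j=0..m. ln (B j) * x j * T j)
     = 2 * ?c * (\<Sum>j=0..m. x j * B j * ln (B j))"
    by (simp add: TB sum_distrib_left mult_ac flip: mult_2)
  finally show ?thesis using A by (simp add: B_def)
qed


lemma key2:
  "2 * sqrt (\<Sum>i = 0..2*m. y i) * (sqrt (\<Sum>i = 0..2*m. y i) - (\<Sum>j=0..m. x j) + Df m y x)
     \<le> Lf m y (Imap m y x) - Lf m y x"
proof -
  let ?c = "sqrt (\<Sum>i = 0..2*m. y i)"
  have "?c - (\<Sum>j=0..m. x j) + Df m y x =
        (\<Sum>j=0..m. x j * (Bf m y x j - 1 + (sqrt (Bf m y x j) - 1)^2))"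
    unfolding sum_xB[symmetric] Df_def
    by (simp add: sum_subtractf sum.distrib[symmetric] algebra_simps)
  also have "\<dots> \<le> (\<Sum>j=0..m. x j * Bf m y x j * ln (Bf m y x j))"
    unfolding mult.assoc
    by (rule sum_mono, rule mult_left_mono) (use B_nonneg xn phi in auto)
  finally have "?c - (\<Sum>j=0..m. x j) + Df m y x \<le> (\<Sum>j=0..m. x j * Bf m y x j * ln (Bf m y x j))" .
  hence "2 * ?c * (?c - (\<Sum>j=0..m. x j) + Df m y x) \<le> 2 * ?c * (\<Sum>j=0..m. x j * Bf m y x j * ln (Bf m y x j))"
    using cp by (intro mult_left_mono) auto
  also have "\<dots> \<le> Lf m y (Imap m y x) - Lf m y x" by (rule key)
  finally show ?thesis .
qed

end

theorem lemma4:
  fixes m :: nat and y x0 xinf :: "nat \<Rightarrow> real"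
  assumes m: "m \<ge> 1"
    and y_nonneg: "\<forall>i \<le> 2*m. y i \<ge> 0"
    and c_pos: "sqrt (\<Sum>i = 0..2*m. y i) > 0"
    and x0_nonneg: "\<forall>j \<le> m. x0 j \<ge> 0"
    and welldef: "\<forall>t. \<forall>k \<le> 2*m. selfconv m (iter m y x0 t) k > 0"
    and welldef_lim: "\<forall>k \<le> 2*m. selfconv m xinf k > 0"
    and limpt: "\<exists>r. strict_mono r \<and>
                 (\<forall>j \<le> m. (\<lambda>t. iter m y x0 (r t) j) \<longlonglongrightarrow> xinf j)"
  shows "\<forall>j \<le> m. xinf j = Imap m y xinf j"
proof -
  obtain r where r: "strict_mono r" and conv: "\<forall>j\<le>m. (\<lambda>t. iter m y x0 (r t) j) \<longlonglongrightarrow> xinf j"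
    using limpt by blast
  define c where "c = sqrt (\<Sum>i = 0..2*m. y i)"
  have cp: "c > 0" using c_pos by (simp add: c_def)
  define X where "X = iter m y x0"
  have XS: "X (Suc t) = Imap m y (X t)" for t by (simp add: X_def)
  have Xn: "\<forall>j\<le>m. X t j \<ge> 0" for t
  proof (induction t)
    case 0 then show ?case using x0_nonneg by (simp add: X_def)
  next
    case (Suc t)
    have "hyp m y (X t)" using Suc y_nonneg c_pos welldef by unfold_locales (auto simp: X_def)
    then show ?case using Suc by (auto simp: XS Imap_eq intro!: mult_nonneg_nonneg hyp.B_nonneg)
  qed
  have H: "hyp m y (X t)" for t using Xn y_nonneg c_pos welldef by unfold_locales (auto simp: X_def)
  have sumX: "(\<Sum>j=0..m. X (Suc t) j) = c" for t
  proof -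
    have "(\<Sum>j=0..m. X (Suc t) j) = (\<Sum>j=0..m. X t j * Bf m y (X t) j)"
      by (rule sum.cong) (auto simp: XS Imap_eq)
    also have "\<dots> = c" using hyp.sum_xB[OF H[of t]] by (simp add: c_def)
    finally show ?thesis .
  qed
  have Xle: "X (Suc t) j \<le> c" if "j \<le> m" for t j
  proof -
    have "X (Suc t) j \<le> (\<Sum>j=0..m. X (Suc t) j)" using that Xn by (intro member_le_sum) auto
    then show ?thesis using sumX by simp
  qed
  have zle: "zext m (X (Suc t)) i \<le> c" "zext m (X (Suc t)) i \<ge> 0" for t i
    using Xle Xn cp by (auto simp: zext_def)
  define M where "M = (\<Sum>k=0..2*m. y k * ln ((2*m+1) * c^2))"
  have LM: "Lf m y (X (Suc t)) \<le> M" for t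
    unfolding Lf_def M_def
  proof (rule sum_mono, rule mult_left_mono)
    fix k assume "k \<in> {0..2*m}"
    hence k: "k \<le> 2*m" by simp
    have qp: "selfconv m (X (Suc t)) k > 0" using welldef k unfolding X_def by blast
    have "selfconv m (X (Suc t)) k \<le> (\<Sum>j=0..k. c * c)"
      unfolding selfconv_def by (rule sum_mono, rule mult_mono) (use zle cp in auto)
    also have "\<dots> = (k+1) * c^2" by (simp add: power2_eq_square)
    also have "\<dots> \<le> (2*m+1) * c^2" using k by (intro mult_right_mono) auto
    finally show "ln (selfconv m (X (Suc t)) k) \<le> ln ((2*m+1) * c^2)"
      using qp by (subst ln_le_cancel_iff) auto
    show "0 \<le> y k" using y_nonneg k by simp
  qed
  have step: "2 * c * Df m y (X (Suc t)) \<le> Lf m y (X (Suc (Suc t))) - Lf m y (X (Suc t))" for t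
    using hyp.key2[OF H[of "Suc t"]] sumX[of t] by (simp add: XS c_def)
  have Dn: "Df m y (X t) \<ge> 0" for t
    unfolding Df_def using Xn by (intro sum_nonneg) auto
  have partial: "(\<Sum>t<n. Df m y (X (Suc t))) \<le> (Lf m y (X (Suc n)) - Lf m y (X 1)) / (2*c)" for n
  proof (induction n)
    case 0 then show ?case by simp
  next
    case (Suc n)
    have "Df m y (X (Suc n)) \<le> (Lf m y (X (Suc (Suc n))) - Lf m y (X (Suc n))) / (2*c)"
      using step[of n] cp by (simp add: field_simps)
    then show ?case using Suc by (simp add: diff_divide_distrib)
  qed
  have "summable (\<lambda>t. Df m y (X (Suc t)))"
  proof (rule summableI_nonneg_bounded)
    show "0 \<le> Df m y (X (Suc n))" for n by (rule Dn)
    show "(\<Sum>t<n. Df m y (X (Suc t))) \<le> (M - Lf m y (X 1)) / (2*c)" for n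
      using partial[of n] LM[of n] cp by (smt (verit) divide_right_mono)
  qed
  hence "(\<lambda>t. Df m y (X (Suc t))) \<longlonglongrightarrow> 0" by (rule summable_LIMSEQ_zero)
  hence "(\<lambda>t. Df m y (X t)) \<longlonglongrightarrow> 0" by (rule LIMSEQ_imp_Suc)
  from LIMSEQ_subseq_LIMSEQ[OF this r]
  have D0: "(\<lambda>t. Df m y (X (r t))) \<longlonglongrightarrow> 0" by (simp add: comp_def)
  have conv': "(\<lambda>t. X (r t) j) \<longlonglongrightarrow> xinf j" if "j \<le> m" for j
    using conv that by (simp add: X_def)
  have xinfn: "\<forall>j\<le>m. xinf j \<ge> 0"
  proof (intro allI impI)
    fix j assume j: "j \<le> m"
    show "xinf j \<ge> 0" by (rule LIMSEQ_le_const[OF conv'[OF j]]) (use Xn j in auto)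
  qed
  have Hinf: "hyp m y xinf" using xinfn y_nonneg c_pos welldef_lim by unfold_locales auto
  have zc: "(\<lambda>t. zext m (X (r t)) i) \<longlonglongrightarrow> zext m xinf i" for i
    by (cases "i \<le> m") (simp_all add: zext_def conv')
  have sc: "(\<lambda>t. selfconv m (X (r t)) k) \<longlonglongrightarrow> selfconv m xinf k" for k
    unfolding selfconv_def by (intro tendsto_intros zc)
  have bc: "(\<lambda>t. Bf m y (X (r t)) j) \<longlonglongrightarrow> Bf m y xinf j" if j: "j \<le> m" for j
    unfolding Bf_def
  proof (intro tendsto_mult tendsto_const tendsto_sum tendsto_divide sc conv')
    fix l assume "l \<in> {0..m}"
    thus "l \<le> m" by simp
    show "selfconv m xinf (l + j) \<noteq> 0" using welldef_lim j \<open>l \<le> m\<close>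
      by (metis add_mono less_irrefl mult_2)
  qed
  have "(\<lambda>t. Df m y (X (r t))) \<longlonglongrightarrow> Df m y xinf"
    unfolding Df_def
    by (intro tendsto_sum tendsto_mult tendsto_power tendsto_diff tendsto_real_sqrt tendsto_const bc conv') auto
  hence Dinf: "Df m y xinf = 0" using D0 by (rule LIMSEQ_unique)
  have terms: "\<forall>j\<in>{0..m}. xinf j * (sqrt (Bf m y xinf j) - 1)^2 = 0"
    using Dinf unfolding Df_def using xinfn by (subst (asm) sum_nonneg_eq_0_iff) auto
  show ?thesis
  proof (intro allI impI)
    fix j assume j: "j \<le> m"
    have t: "xinf j * (sqrt (Bf m y xinf j) - 1)^2 = 0" using terms j by auto
    show "xinf j = Imap m y xinf j"
    proof (cases "xinf j = 0")
      case True then show ?thesis using j by (simp add: Imap_eq)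
    next
      case False
      hence "sqrt (Bf m y xinf j) = 1" using t by simp
      hence "Bf m y xinf j = 1" using hyp.B_nonneg[OF Hinf j] by simp
      then show ?thesis using j by (simp add: Imap_eq)
    qed
  qed
qed

end
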